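(* Let $\ell>0$, $T>0$, $0<\underline a\le\overline a<\infty$, and let $a_1,a_2$ be constants with $\underline a\le a_1,a_2\le\overline a$. Let $u_0\in L^2(0,\ell)$, $u_0\neq0$, and $f\in L^2((0,\ell)\times(0,T))$. For $i=1,2$ let $u_i$ be the solution of $$\partial_t u_i-a_i\,\partial_x(x\,\partial_x u_i)=f\ \text{ in }(0,\ell)\times(0,T),\quad x\,\partial_x u_i(x,t)|_{x=0}=0,\ u_i(\ell,t)=0\ (t\in(0,T)),\quad u_i(x,0)=u_0(x).$$ Assume there exist $t_0\in(0,T]$ and $\mu>0$ such that $\int_0^\ell x|\partial_x u_i(x,t_0)|^2\,dx\ge\mu$ for $i=1,2$. Then there exists a constant $C>0$, depending only on $\underline a,\overline a,\ell$ and $\mu$, such that $$|a_2-a_1|\le C\left(\int_0^\ell\Big(|\partial_t u_1(x,t_0)-\partial_t u_2(x,t_0)|^2+x\,|\partial_x u_2(x,t_0)-\partial_x u_1(x,t_0)|^2\Big)dx\right)^{1/2}.$$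
   Context: Solutions are understood as mild solutions $u(t)=e^{tA}u_0+\int_0^te^{(t-s)A}f(s)\,ds$, where $A u=a\,\partial_x(x\partial_x u)$ on $D(A)=\{u\in L^2(0,\ell):\int_0^\ell x|\partial_xu|^2dx<\infty,\ u(\ell)=0,\ x\partial_x u\in H^1(0,\ell)\}$ generates an analytic semigroup of contractions on $L^2(0,\ell)$; the solutions are assumed as smooth as needed for the expressions to make sense. *)

theory Defs
  imports "HOL-Analysis.Analysis"
begin

definition dx :: "(real \<Rightarrow> real \<Rightarrow> real) \<Rightarrow> real \<Rightarrow> real \<Rightarrow> real" where
  "dx u x t = deriv (\<lambda>y. u y t) x"

definition dt :: "real \<Rightarrow> (real \<Rightarrow> real \<Rightarrow> real) \<Rightarrow> real \<Rightarrow> real \<Rightarrow> real" where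
  "dt T u x t = vector_derivative (\<lambda>s. u x s) (at t within {0..T})"

text \<open>u solves  u_t - a (x u_x)_x = f  in (0,l) x (0,T],  x u_x -> 0 at x = 0,
  u(l,t) = 0,  u(.,t) -> u0 in L^2(0,l) as t -> 0+, with the regularity
  (u(t) in D(A), u_t(t) in L^2) assumed for the expressions to make sense.\<close>
definition is_solution ::
  "real \<Rightarrow> real \<Rightarrow> real \<Rightarrow> (real \<Rightarrow> real) \<Rightarrow> (real \<Rightarrow> real \<Rightarrow> real) \<Rightarrow> (real \<Rightarrow> real \<Rightarrow> real) \<Rightarrow> bool"
where
  "is_solution l T a u0 f u \<longleftrightarrow>
     (\<forall>t\<in>{0<..T}. \<forall>x\<in>{0<..<l}.
        (\<lambda>s. u x s) differentiable (at t within {0..T}) \<and>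
        (\<lambda>y. u y t) differentiable (at x) \<and>
        (\<lambda>y. y * dx u y t) differentiable (at x) \<and>
        dt T u x t - a * deriv (\<lambda>y. y * dx u y t) x = f x t) \<and>
     (\<forall>t\<in>{0<..T}. ((\<lambda>x. x * dx u x t) \<longlongrightarrow> 0) (at_right 0) \<and>
        u l t = 0 \<and> ((\<lambda>x. u x t) \<longlongrightarrow> 0) (at_left l)) \<and>
     (\<forall>t\<in>{0<..T}.
        set_integrable lborel {0<..<l} (\<lambda>x. (u x t)\<^sup>2) \<and>
        set_integrable lborel {0<..<l} (\<lambda>x. x * (dx u x t)\<^sup>2) \<and>
        set_integrable lborel {0<..<l} (\<lambda>x. (dt T u x t)\<^sup>2)) \<and>
     ((\<lambda>t. LINT x:{0<..<l}|lborel. (u x t - u0 x)\<^sup>2) \<longlongrightarrow> 0) (at_right 0)"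

end

theory Submission
  imports Defs
begin

lemma meas_deriv:
  fixes F D :: "real \<Rightarrow> real" and l :: real
  assumes der: "\<And>x. x\<in>{0<..<l} \<Longrightarrow> (F has_real_derivative D x) (at x)"
  shows "(\<lambda>x. indicator {0<..<l} x * D x) \<in> borel_measurable borel"
proof -
  have contF: "continuous_on {0<..<l} F"
    using der by (meson DERIV_isCont continuous_at_imp_continuous_on)
  define u where "u = (\<lambda>n x. indicator {0<..<l - 1/Suc n} x * ((F (x + 1/Suc n) - F x) / (1/Suc n)))"
  have "u n \<in> borel_measurable borel" for n
  proof -
    have pos: "0 < 1/real (Suc n)" by simp
    have sub: "{0<..<l - 1/Suc n} \<subseteq> {0<..<l}" by (intro subsetI) (smt (verit) greaterThanLessThan_iff pos)
    have "continuous_on {0<..<l - 1/Suc n} (\<lambda>x. (F (x + 1/Suc n) - F x) / (1/Suc n))"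
    proof (intro continuous_intros)
      show "continuous_on {0<..<l - 1/Suc n} (\<lambda>x. F (x + 1/Suc n))"
        proof (rule continuous_on_compose2[OF contF])
          show "(\<lambda>x. x + 1/Suc n) ` {0<..<l - 1/Suc n} \<subseteq> {0<..<l}"
            by (intro image_subsetI) (smt (verit) greaterThanLessThan_iff pos)
        qed (intro continuous_intros)
      show "continuous_on {0<..<l - 1/Suc n} F"
        by (rule continuous_on_subset[OF contF sub])
    qed simp
    from borel_measurable_continuous_on_indicator[OF _ this]
    show ?thesis unfolding u_def by simp
  qed
  moreover have "(\<lambda>n. u n x) \<longlonglongrightarrow> indicator {0<..<l} x * D x" for x
  proof (cases "x \<in> {0<..<l}")
    case True
    have lim: "((\<lambda>h. (F (x + h) - F x) / h) \<longlongrightarrow> D x) (at 0)"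
      using der[OF True] by (simp add: DERIV_def)
    have fl: "filterlim (\<lambda>n. 1 / real (Suc n)) (at 0) sequentially"
      unfolding filterlim_at
      by (auto intro!: LIMSEQ_Suc[OF lim_inverse_n'] simp del: of_nat_Suc)
    have "(\<lambda>n. (F (x + 1/Suc n) - F x) / (1/Suc n)) \<longlonglongrightarrow> D x"
      using filterlim_compose[OF lim fl] by simp
    moreover have "eventually (\<lambda>n. u n x = (F (x + 1/Suc n) - F x) / (1/Suc n)) sequentially"
    proof -
      obtain N where N: "1 / (l - x) < real N" using reals_Archimedean2 by blast
      have "x < l - 1/Suc n" if "n \<ge> N" for n
      proof -
        have "1/(l-x) < Suc n" using N that by linarith
        then have "1 / Suc n < l - x" using True
          by (simp add: field_simps)
        then show ?thesis by simp
      qed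
      then show ?thesis using True unfolding u_def eventually_sequentially
        by (intro exI[of _ N]) (auto simp: indicator_def simp del: of_nat_Suc)
    qed
    ultimately show ?thesis using True
      by (simp add: tendsto_cong)
  next
    case False
    have "x \<notin> {0<..<l - 1/Suc n}" for n using False
      by (smt (verit) greaterThanLessThan_iff divide_pos_pos of_nat_0_less_iff zero_less_Suc)
    then have "u n x = 0" for n unfolding u_def by simp
    then show ?thesis using False by simp
  qed
  ultimately show ?thesis by (rule borel_measurable_LIMSEQ_real[rotated])
qed

lemma F_bound:
  fixes F D :: "real \<Rightarrow> real" and l x :: real
  assumes der: "\<And>x. x\<in>{0<..<l} \<Longrightarrow> (F has_real_derivative D x) (at x)"
  and lim0: "(F \<longlongrightarrow> 0) (at_right 0)"
  and int: "(\<lambda>y. (D y)\<^sup>2) integrable_on {0<..<l}"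
  and x: "x\<in>{0<..<l}"
  shows "(F x)\<^sup>2 \<le> x * integral {0<..<l} (\<lambda>y. (D y)\<^sup>2)"
proof -
  define J where "J = integral {0<..<l} (\<lambda>y. (D y)\<^sup>2)"
  have J0: "J \<ge> 0" unfolding J_def by (rule integral_nonneg[OF int]) simp
  have step: "\<bar>F x - F e\<bar> \<le> J/(2*c) + c*x/2" if e: "0 < e" "e \<le> x" and c: "c > 0" for e c
  proof -
    have sub: "{e..x} \<subseteq> {0<..<l}" using e x by auto
    have "(D has_integral (F x - F e)) {e..x}"
    proof (rule fundamental_theorem_of_calculus)
      show "e \<le> x" by fact
      fix y assume "y \<in> {e..x}"
      then have "y \<in> {0<..<l}" using sub by auto
      from der[OF this] show "(F has_vector_derivative D y) (at y within {e..x})"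
        by (simp add: has_real_derivative_iff_has_vector_derivative has_vector_derivative_at_within)
    qed
    then have iD: "D integrable_on {e..x}" and eqD: "integral {e..x} D = F x - F e"
      by (auto simp: integrable_on_def integral_unique)
    have i2: "(\<lambda>y. (D y)\<^sup>2) integrable_on {e..x}"
      by (rule integrable_on_subinterval[OF int sub])
    have ig: "(\<lambda>y. (D y)\<^sup>2 / (2*c) + c/2) integrable_on {e..x}"
      by (intro integrable_add integrable_const_ivl) (use integrable_on_divide[OF i2] in simp)
    have "\<bar>F x - F e\<bar> = norm (integral {e..x} D)" using eqD by simp
    also have "\<dots> \<le> integral {e..x} (\<lambda>y. (D y)\<^sup>2 / (2*c) + c/2)"
    proof (rule integral_norm_bound_integral[OF iD ig])
      fix y
      have "0 \<le> (\<bar>D y\<bar> - c)\<^sup>2" by simp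
      then have "2 * c * \<bar>D y\<bar> \<le> (D y)\<^sup>2 + c\<^sup>2" using c
        by (simp add: power2_eq_square algebra_simps abs_mult_self_eq)
      then show "norm (D y) \<le> (D y)\<^sup>2 / (2*c) + c/2" using c
        by (simp add: field_simps power2_eq_square)
    qed
    also have "\<dots> = integral {e..x} (\<lambda>y. (D y)\<^sup>2) / (2*c) + (x - e) * (c/2)"
    proof -
      have "integral {e..x} (\<lambda>y. (D y)\<^sup>2 / (2*c) + c/2) = integral {e..x} (\<lambda>y. (D y)\<^sup>2 / (2*c)) + integral {e..x} (\<lambda>y. c/2)"
        by (rule integral_add) (use integrable_on_divide[OF i2] in auto)
      moreover have "integral {e..x} (\<lambda>y. (D y)\<^sup>2 / (2*c)) = integral {e..x} (\<lambda>y. (D y)\<^sup>2) / (2*c)"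
        by (rule integral_divide)
      moreover have "integral {e..x} (\<lambda>y. c/2) = (x - e) * (c/2)" using e by simp
      ultimately show ?thesis by simp
    qed
    also have "\<dots> \<le> J / (2*c) + c*x/2"
    proof -
      have "integral {e..x} (\<lambda>y. (D y)\<^sup>2) \<le> J"
        unfolding J_def by (rule integral_subset_le[OF sub i2 int]) simp
      then have "integral {e..x} (\<lambda>y. (D y)\<^sup>2) / (2*c) \<le> J / (2*c)" using c
        by (simp add: divide_right_mono)
      moreover have "(x - e) * (c/2) \<le> c*x/2" using c e by (simp add: field_simps)
      ultimately show ?thesis by linarith
    qed
    finally show ?thesis .
  qed
  have bnd: "\<bar>F x\<bar> \<le> J/(2*c) + c*x/2" if c: "c > 0" for c
  proof -
    have "((\<lambda>e. \<bar>F x - F e\<bar>) \<longlongrightarrow> \<bar>F x - 0\<bar>) (at_right 0)"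
      by (intro tendsto_intros lim0)
    moreover have "eventually (\<lambda>e. \<bar>F x - F e\<bar> \<le> J/(2*c) + c*x/2) (at_right 0)"
      unfolding eventually_at_right_field using x step[OF _ _ c]
      by (intro exI[of _ x]) auto
    ultimately show ?thesis
      by (intro tendsto_upperbound[where F="at_right (0::real)"]) (auto simp: trivial_limit_at_right_real)
  qed
  show ?thesis
  proof (cases "J = 0")
    case True
    have "F x = 0"
    proof (rule ccontr)
      assume ne: "F x \<noteq> 0"
      have "\<bar>F x\<bar> \<le> (\<bar>F x\<bar>/x)*x/2" using bnd[of "\<bar>F x\<bar>/x"] ne x True by simp
      then show False using x ne by simp
    qed
    then show ?thesis using True J_def by simp
  next
    case False
    then have Jp: "J > 0" using J0 by simp
    define sq where "sq = sqrt (J/x)"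
    have sp: "sq > 0" using Jp x by (simp add: sq_def)
    have s2: "sq\<^sup>2 = J/x" using Jp x by (simp add: sq_def)
    have "\<bar>F x\<bar> \<le> J/(2 * sq) + sq*x/2" by (rule bnd[OF sp])
    also have "\<dots> = J/sq" using sp s2 x by (simp add: field_simps power2_eq_square)
    finally have "\<bar>F x\<bar> \<le> J/sq" .
    then have "(F x)\<^sup>2 \<le> (J/sq)\<^sup>2"
      by (metis abs_ge_zero power2_abs power_mono)
    also have "\<dots> = x * J" using sp s2 x Jp by (simp add: power_divide field_simps power2_eq_square)
    finally show ?thesis unfolding J_def .
  qed
qed

lemma core:
  fixes p q g1 g2 f :: "real \<Rightarrow> real" and l a1 a2 A \<mu> :: real
  assumes l: "l > 0" and a2: "0 < a2" "a2 \<le> A" and mu: "\<mu> > 0"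
  and dP: "\<And>x. x\<in>{0<..<l} \<Longrightarrow> (\<lambda>y. y * deriv p y) differentiable at x"
  and dQ: "\<And>x. x\<in>{0<..<l} \<Longrightarrow> (\<lambda>y. y * deriv q y) differentiable at x"
  and e1: "\<And>x. x\<in>{0<..<l} \<Longrightarrow> g1 x - a1 * deriv (\<lambda>y. y * deriv p y) x = f x"
  and e2: "\<And>x. x\<in>{0<..<l} \<Longrightarrow> g2 x - a2 * deriv (\<lambda>y. y * deriv q y) x = f x"
  and lp: "((\<lambda>x. x * deriv p x) \<longlongrightarrow> 0) (at_right 0)"
  and lq: "((\<lambda>x. x * deriv q x) \<longlongrightarrow> 0) (at_right 0)"
  and ip: "set_integrable lborel {0<..<l} (\<lambda>x. x * (deriv p x)\<^sup>2)"
  and iq: "set_integrable lborel {0<..<l} (\<lambda>x. x * (deriv q x)\<^sup>2)"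
  and ig1: "set_integrable lborel {0<..<l} (\<lambda>x. (g1 x)\<^sup>2)"
  and ig2: "set_integrable lborel {0<..<l} (\<lambda>x. (g2 x)\<^sup>2)"
  and mup: "\<mu> \<le> (LINT x:{0<..<l}|lborel. x * (deriv p x)\<^sup>2)"
  shows "\<bar>a2 - a1\<bar> \<le> sqrt ((2*l + 2*A\<^sup>2)/\<mu>) *
           sqrt (LINT x:{0<..<l}|lborel. (g1 x - g2 x)\<^sup>2 + x * (deriv q x - deriv p x)\<^sup>2)"
proof -
  define Ao where "Ao = {0<..<l::real}"
  define P where "P = (\<lambda>y. y * deriv p y)"
  define Q where "Q = (\<lambda>y. y * deriv q y)"
  define F where "F = (\<lambda>y. a1 * P y - a2 * Q y)"
  define D where "D = (\<lambda>y. a1 * deriv P y - a2 * deriv Q y)"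
  have AoS: "Ao \<in> sets borel" unfolding Ao_def by simp
  have FD: "(F has_real_derivative D x) (at x)" if "x \<in> Ao" for x
  proof -
    have "(P has_real_derivative deriv P x) (at x)" "(Q has_real_derivative deriv Q x) (at x)"
      using dP[of x] dQ[of x] that unfolding Ao_def P_def Q_def
      by (auto simp: DERIV_deriv_iff_real_differentiable)
    then show ?thesis unfolding F_def D_def by (intro DERIV_diff DERIV_cmult)
  qed
  have Deq: "g1 x - g2 x = D x" if "x \<in> Ao" for x
    using e1[of x] e2[of x] that unfolding D_def P_def Q_def Ao_def by simp
  have contP: "continuous_on Ao P" and contQ: "continuous_on Ao Q"
    using dP dQ unfolding Ao_def P_def Q_def
    by (auto intro!: continuous_at_imp_continuous_on differentiable_imp_continuous_within)
  have cp: "continuous_on Ao (\<lambda>x. deriv p x)"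
  proof -
    have "continuous_on Ao (\<lambda>x. P x / x)"
      by (intro continuous_intros contP) (auto simp: Ao_def)
    moreover have "\<And>x. x \<in> Ao \<Longrightarrow> P x / x = deriv p x" by (auto simp: Ao_def P_def)
    ultimately show ?thesis by (rule continuous_on_eq)
  qed
  have cq: "continuous_on Ao (\<lambda>x. deriv q x)"
  proof -
    have "continuous_on Ao (\<lambda>x. Q x / x)"
      by (intro continuous_intros contQ) (auto simp: Ao_def)
    moreover have "\<And>x. x \<in> Ao \<Longrightarrow> Q x / x = deriv q x" by (auto simp: Ao_def Q_def)
    ultimately show ?thesis by (rule continuous_on_eq)
  qed
  have mD[measurable]: "(\<lambda>x. indicator Ao x * D x) \<in> borel_measurable borel"
    unfolding Ao_def by (rule meas_deriv) (use FD in \<open>auto simp: Ao_def\<close>)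
  have mp[measurable]: "(\<lambda>x. indicator Ao x * deriv p x) \<in> borel_measurable borel"
    using borel_measurable_continuous_on_indicator[OF AoS cp] by simp
  have mq[measurable]: "(\<lambda>x. indicator Ao x * deriv q x) \<in> borel_measurable borel"
    using borel_measurable_continuous_on_indicator[OF AoS cq] by simp
  have mD2: "set_borel_measurable lborel Ao (\<lambda>x. (g1 x - g2 x)\<^sup>2)"
  proof -
    have "(\<lambda>x. indicator Ao x *\<^sub>R (g1 x - g2 x)\<^sup>2) = (\<lambda>x. (indicator Ao x * D x)\<^sup>2)"
      by (auto simp: indicator_def Deq fun_eq_iff)
    moreover have "(\<lambda>x. (indicator Ao x * D x)\<^sup>2) \<in> borel_measurable lborel" by measurable
    ultimately show ?thesis unfolding set_borel_measurable_def by simp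
  qed
  have mV: "set_borel_measurable lborel Ao (\<lambda>x. x * (deriv q x - deriv p x)\<^sup>2)"
  proof -
    have "(\<lambda>x. indicator Ao x *\<^sub>R (x * (deriv q x - deriv p x)\<^sup>2)) =
          (\<lambda>x. x * (indicator Ao x * deriv q x - indicator Ao x * deriv p x)\<^sup>2)"
      by (auto simp: indicator_def fun_eq_iff)
    moreover have "(\<lambda>x. x * (indicator Ao x * deriv q x - indicator Ao x * deriv p x)\<^sup>2) \<in> borel_measurable lborel"
      by measurable
    ultimately show ?thesis unfolding set_borel_measurable_def by simp
  qed
  define B where "B = (\<lambda>x. 2 * (g1 x)\<^sup>2 + 2 * (g2 x)\<^sup>2 + (2 * (x * (deriv q x)\<^sup>2) + 2 * (x * (deriv p x)\<^sup>2)))"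
  have iB: "set_integrable lborel Ao B"
    unfolding B_def Ao_def using ip iq ig1 ig2 by (intro set_integral_add set_integrable_mult_right) auto
  have iD2: "set_integrable lborel Ao (\<lambda>x. (g1 x - g2 x)\<^sup>2)"
  proof (rule set_integrable_bound[OF iB mD2])
    show "AE x in lborel. x \<in> Ao \<longrightarrow> norm ((g1 x - g2 x)\<^sup>2) \<le> norm (B x)"
    proof (intro AE_I2 impI)
      fix x assume x: "x \<in> Ao"
      have "(g1 x - g2 x)\<^sup>2 \<le> 2 * (g1 x)\<^sup>2 + 2 * (g2 x)\<^sup>2"
        using sum_squares_ge_zero[of "g1 x + g2 x" 0] by (simp add: power2_eq_square algebra_simps)
      moreover have "0 \<le> x * (deriv q x)\<^sup>2" "0 \<le> x * (deriv p x)\<^sup>2" using x by (auto simp: Ao_def)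
      ultimately show "norm ((g1 x - g2 x)\<^sup>2) \<le> norm (B x)" unfolding B_def by simp
    qed
  qed
  have iV: "set_integrable lborel Ao (\<lambda>x. x * (deriv q x - deriv p x)\<^sup>2)"
  proof (rule set_integrable_bound[OF iB mV])
    show "AE x in lborel. x \<in> Ao \<longrightarrow> norm (x * (deriv q x - deriv p x)\<^sup>2) \<le> norm (B x)"
    proof (intro AE_I2 impI)
      fix x assume x: "x \<in> Ao"
      have "(deriv q x - deriv p x)\<^sup>2 \<le> 2 * (deriv q x)\<^sup>2 + 2 * (deriv p x)\<^sup>2"
        using sum_squares_ge_zero[of "deriv q x + deriv p x" 0] by (simp add: power2_eq_square algebra_simps)
      then have "x * (deriv q x - deriv p x)\<^sup>2 \<le> x * (2 * (deriv q x)\<^sup>2 + 2 * (deriv p x)\<^sup>2)"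
        using x by (intro mult_left_mono) (auto simp: Ao_def)
      then have "x * (deriv q x - deriv p x)\<^sup>2 \<le> 2 * (x * (deriv q x)\<^sup>2) + 2 * (x * (deriv p x)\<^sup>2)"
        by (simp add: algebra_simps)
      moreover have "0 \<le> 2 * (g1 x)\<^sup>2 + 2 * (g2 x)\<^sup>2" by simp
      ultimately have le: "x * (deriv q x - deriv p x)\<^sup>2 \<le> B x" unfolding B_def by linarith
      moreover have "0 \<le> x * (deriv q x - deriv p x)\<^sup>2" using x by (auto simp: Ao_def)
      ultimately show "norm (x * (deriv q x - deriv p x)\<^sup>2) \<le> norm (B x)" by simp
    qed
  qed
  define J where "J = integral Ao (\<lambda>x. (g1 x - g2 x)\<^sup>2)"
  define V where "V = integral Ao (\<lambda>x. x * (deriv q x - deriv p x)\<^sup>2)"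
  define W where "W = integral Ao (\<lambda>x. x * (deriv p x)\<^sup>2)"
  have hD2: "(\<lambda>x. (g1 x - g2 x)\<^sup>2) integrable_on Ao" using set_borel_integral_eq_integral(1)[OF iD2] .
  have hV: "(\<lambda>x. x * (deriv q x - deriv p x)\<^sup>2) integrable_on Ao" using set_borel_integral_eq_integral(1)[OF iV] .
  have hW: "(\<lambda>x. x * (deriv p x)\<^sup>2) integrable_on Ao" using set_borel_integral_eq_integral(1)[OF ip] unfolding Ao_def .
  have I_eq: "(LINT x:{0<..<l}|lborel. (g1 x - g2 x)\<^sup>2 + x * (deriv q x - deriv p x)\<^sup>2) = J + V"
  proof -
    have "set_integrable lborel Ao (\<lambda>x. (g1 x - g2 x)\<^sup>2 + x * (deriv q x - deriv p x)\<^sup>2)"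
      using iD2 iV by (rule set_integral_add)
    from set_borel_integral_eq_integral(2)[OF this]
    show ?thesis unfolding J_def V_def Ao_def[symmetric] using hD2 hV by (simp add: integral_add)
  qed
  have muW: "\<mu> \<le> W" using mup set_borel_integral_eq_integral(2)[OF ip] unfolding W_def Ao_def by simp
  have J0: "J \<ge> 0" unfolding J_def by (rule integral_nonneg[OF hD2]) simp
  have V0: "V \<ge> 0" unfolding V_def by (rule integral_nonneg[OF hV]) (auto simp: Ao_def)
  have JD: "J = integral {0<..<l} (\<lambda>y. (D y)\<^sup>2)"
    unfolding J_def Ao_def[symmetric] by (rule integral_cong) (simp add: Deq)
  have hD2': "(\<lambda>y. (D y)\<^sup>2) integrable_on {0<..<l}"
    using hD2 Henstock_Kurzweil_Integration.integrable_cong[of Ao "\<lambda>x. (g1 x - g2 x)\<^sup>2" "\<lambda>y. (D y)\<^sup>2"]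
    by (simp add: Deq Ao_def)
  have limF: "(F \<longlongrightarrow> 0) (at_right 0)"
  proof -
    have "(F \<longlongrightarrow> a1 * 0 - a2 * 0) (at_right 0)"
      unfolding F_def P_def Q_def by (intro tendsto_intros lp lq)
    then show ?thesis by simp
  qed
  have Fb: "(F x)\<^sup>2 \<le> x * J" if "x \<in> Ao" for x
    unfolding JD by (rule F_bound[OF _ limF hD2']) (use FD that in \<open>auto simp: Ao_def\<close>)
  have pw: "(a1 - a2)\<^sup>2 * (x * (deriv p x)\<^sup>2) \<le> 2 * J + 2 * A\<^sup>2 * (x * (deriv q x - deriv p x)\<^sup>2)"
    if x: "x \<in> Ao" for x
  proof -
    define pp where "pp = deriv p x"
    define qq where "qq = deriv q x"
    have xp: "x > 0" using x by (simp add: Ao_def)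
    have Fx: "F x = a1 * x * pp - a2 * x * qq" unfolding F_def P_def Q_def pp_def qq_def by simp
    have key: "(a1 - a2) * x * pp = F x - a2 * (x * (pp - qq))" unfolding Fx by (simp add: algebra_simps)
    have "((a1 - a2) * x * pp)\<^sup>2 \<le> 2 * (F x)\<^sup>2 + 2 * (a2 * (x * (pp - qq)))\<^sup>2"
      unfolding key using sum_squares_ge_zero[of "F x + a2 * (x * (pp - qq))" 0]
      by (simp add: power2_eq_square algebra_simps)
    also have "\<dots> \<le> 2 * (x * J) + 2 * (A\<^sup>2 * (x * (pp - qq))\<^sup>2)"
    proof -
      have "a2\<^sup>2 \<le> A\<^sup>2" using a2 by (intro power_mono) auto
      then have "a2\<^sup>2 * (x * (pp - qq))\<^sup>2 \<le> A\<^sup>2 * (x * (pp - qq))\<^sup>2" by (intro mult_right_mono) auto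
      then show ?thesis using Fb[OF x] by (simp add: power_mult_distrib)
    qed
    finally have "x * ((a1 - a2)\<^sup>2 * (x * pp\<^sup>2)) \<le> x * (2 * J + 2 * A\<^sup>2 * (x * (qq - pp)\<^sup>2))"
      by (simp add: power2_eq_square algebra_simps)
    then show ?thesis using xp unfolding pp_def qq_def by simp
  qed
  have "integral Ao (\<lambda>x. (a1 - a2)\<^sup>2 * (x * (deriv p x)\<^sup>2)) \<le> integral Ao (\<lambda>x. 2 * J + 2 * A\<^sup>2 * (x * (deriv q x - deriv p x)\<^sup>2))"
  proof (rule integral_le)
    show "(\<lambda>x. (a1 - a2)\<^sup>2 * (x * (deriv p x)\<^sup>2)) integrable_on Ao" by (rule integrable_on_mult_right[OF hW])
    have "(\<lambda>x. 2 * J) integrable_on Ao" unfolding Ao_def integrable_on_open_interval_real by (rule Henstock_Kurzweil_Integration.integrable_const_ivl)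
    then show "(\<lambda>x. 2 * J + 2 * A\<^sup>2 * (x * (deriv q x - deriv p x)\<^sup>2)) integrable_on Ao"
      by (intro integrable_add integrable_on_mult_right[OF hV])
  qed (rule pw)
  moreover have "integral Ao (\<lambda>x. (a1 - a2)\<^sup>2 * (x * (deriv p x)\<^sup>2)) = (a1 - a2)\<^sup>2 * W"
    unfolding W_def using integral_cmul[of Ao "(a1 - a2)\<^sup>2" "\<lambda>x. x * (deriv p x)\<^sup>2"] by simp
  moreover have "integral Ao (\<lambda>x. 2 * J + 2 * A\<^sup>2 * (x * (deriv q x - deriv p x)\<^sup>2)) = 2 * J * l + 2 * A\<^sup>2 * V"
  proof -
    have c: "(\<lambda>x. 2 * J) integrable_on Ao" unfolding Ao_def integrable_on_open_interval_real by (rule Henstock_Kurzweil_Integration.integrable_const_ivl)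
    have ic: "integral Ao (\<lambda>x. 2 * J) = 2 * J * l"
      unfolding Ao_def using l by (simp add: integral_open_interval_real[symmetric])
    have iv: "integral Ao (\<lambda>x. 2 * A\<^sup>2 * (x * (deriv q x - deriv p x)\<^sup>2)) = 2 * A\<^sup>2 * V"
      unfolding V_def using integral_cmul[of Ao "2 * A\<^sup>2" "\<lambda>x. x * (deriv q x - deriv p x)\<^sup>2"] by simp
    have ia: "integral Ao (\<lambda>x. 2 * J + 2 * A\<^sup>2 * (x * (deriv q x - deriv p x)\<^sup>2)) =
       integral Ao (\<lambda>x. 2 * J) + integral Ao (\<lambda>x. 2 * A\<^sup>2 * (x * (deriv q x - deriv p x)\<^sup>2))"
      by (rule integral_add[OF c integrable_on_mult_right[OF hV]])
    show ?thesis unfolding ia ic iv ..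
  qed
  ultimately have main: "(a1 - a2)\<^sup>2 * W \<le> 2 * J * l + 2 * A\<^sup>2 * V" by linarith
  have "(a1 - a2)\<^sup>2 * \<mu> \<le> (a1 - a2)\<^sup>2 * W" using muW by (intro mult_left_mono) auto
  also have "\<dots> \<le> 2 * J * l + 2 * A\<^sup>2 * V" by (rule main)
  also have "\<dots> \<le> (2*l + 2*A\<^sup>2) * (J + V)"
    using J0 V0 l by (simp add: algebra_simps)
  finally have sq: "(a1 - a2)\<^sup>2 \<le> (2*l + 2*A\<^sup>2) / \<mu> * (J + V)" using mu
    by (simp add: field_simps)
  have "\<bar>a2 - a1\<bar> = sqrt ((a1 - a2)\<^sup>2)" by simp
  also have "\<dots> \<le> sqrt ((2*l + 2*A\<^sup>2) / \<mu> * (J + V))" by (rule real_sqrt_le_mono[OF sq])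
  also have "\<dots> = sqrt ((2*l + 2*A\<^sup>2)/\<mu>) * sqrt (J + V)" by (rule real_sqrt_mult)
  finally show ?thesis unfolding I_eq .
qed

theorem theorem3p1:
  fixes l a_lo a_hi \<mu> :: real
  assumes "l > 0" and "0 < a_lo" and "a_lo \<le> a_hi" and "\<mu> > 0"
  shows "\<exists>C>0. \<forall>(T::real) (a1::real) (a2::real) (u0::real\<Rightarrow>real) (f::real\<Rightarrow>real\<Rightarrow>real)
            (u1::real\<Rightarrow>real\<Rightarrow>real) (u2::real\<Rightarrow>real\<Rightarrow>real) (t0::real).
     T > 0 \<and> a_lo \<le> a1 \<and> a1 \<le> a_hi \<and> a_lo \<le> a2 \<and> a2 \<le> a_hi \<and>
     u0 \<in> borel_measurable lborel \<and> set_integrable lborel {0<..<l} (\<lambda>x. (u0 x)\<^sup>2) \<and>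
     \<not> (AE x in lborel. x \<in> {0<..<l} \<longrightarrow> u0 x = 0) \<and>
     (\<lambda>(x,t). f x t) \<in> borel_measurable lborel \<and>
     set_integrable lborel ({0<..<l} \<times> {0<..<T}) (\<lambda>(x,t). (f x t)\<^sup>2) \<and>
     is_solution l T a1 u0 f u1 \<and> is_solution l T a2 u0 f u2 \<and>
     t0 \<in> {0<..T} \<and>
     (LINT x:{0<..<l}|lborel. x * (dx u1 x t0)\<^sup>2) \<ge> \<mu> \<and>
     (LINT x:{0<..<l}|lborel. x * (dx u2 x t0)\<^sup>2) \<ge> \<mu>
     \<longrightarrow> \<bar>a2 - a1\<bar> \<le> C * sqrt (LINT x:{0<..<l}|lborel.
              (dt T u1 x t0 - dt T u2 x t0)\<^sup>2 + x * (dx u2 x t0 - dx u1 x t0)\<^sup>2)"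
proof (intro exI[of _ "sqrt ((2*l + 2*a_hi\<^sup>2)/\<mu>)"] conjI allI impI)
  show "sqrt ((2*l + 2*a_hi\<^sup>2)/\<mu>) > 0"
    using assms by (simp add: add_pos_nonneg)
next
  fix T a1 a2 :: real and u0 :: "real \<Rightarrow> real" and f u1 u2 :: "real \<Rightarrow> real \<Rightarrow> real" and t0 :: real
  assume H: "T > 0 \<and> a_lo \<le> a1 \<and> a1 \<le> a_hi \<and> a_lo \<le> a2 \<and> a2 \<le> a_hi \<and>
     u0 \<in> borel_measurable lborel \<and> set_integrable lborel {0<..<l} (\<lambda>x. (u0 x)\<^sup>2) \<and>
     \<not> (AE x in lborel. x \<in> {0<..<l} \<longrightarrow> u0 x = 0) \<and>
     (\<lambda>(x,t). f x t) \<in> borel_measurable lborel \<and>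
     set_integrable lborel ({0<..<l} \<times> {0<..<T}) (\<lambda>(x,t). (f x t)\<^sup>2) \<and>
     is_solution l T a1 u0 f u1 \<and> is_solution l T a2 u0 f u2 \<and>
     t0 \<in> {0<..T} \<and>
     (LINT x:{0<..<l}|lborel. x * (dx u1 x t0)\<^sup>2) \<ge> \<mu> \<and>
     (LINT x:{0<..<l}|lborel. x * (dx u2 x t0)\<^sup>2) \<ge> \<mu>"
  then have a2: "0 < a2" "a2 \<le> a_hi" and t0: "t0 \<in> {0<..T}"
    and s1: "is_solution l T a1 u0 f u1" and s2: "is_solution l T a2 u0 f u2"
    and mu1: "\<mu> \<le> (LINT x:{0<..<l}|lborel. x * (dx u1 x t0)\<^sup>2)"
    using assms by auto
  show "\<bar>a2 - a1\<bar> \<le> sqrt ((2*l + 2*a_hi\<^sup>2)/\<mu>) * sqrt (LINT x:{0<..<l}|lborel.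
              (dt T u1 x t0 - dt T u2 x t0)\<^sup>2 + x * (dx u2 x t0 - dx u1 x t0)\<^sup>2)"
    unfolding dx_def
  proof (rule core[where p="\<lambda>y. u1 y t0" and q="\<lambda>y. u2 y t0" and f="\<lambda>x. f x t0"])
    show "0 < l" "0 < a2" "a2 \<le> a_hi" "0 < \<mu>" using assms a2 by auto
    show "\<mu> \<le> (LINT x:{0<..<l}|lborel. x * (deriv (\<lambda>y. u1 y t0) x)\<^sup>2)"
      using mu1 unfolding dx_def .
  qed (use s1 s2 t0 in \<open>auto simp: is_solution_def dx_def\<close>)
qed

end
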